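(* Let $H$ be a connected graph with a pendant vertex $w$, and let $G$ be the graph formed from $H$ by adding two new vertices $u$ and $v$ which are adjacent to $w$ and to each other but have no other neighbors. If $\overline{H}$ has an orthogonal vector representation in $\mathbb{R}^3$ consisting of pairwise linearly independent vectors, then so does $\overline{G}$.
   Context: All graphs are finite and simple; $\overline{G}$ denotes the complement of $G$. A pendant vertex is a vertex of degree 1. An orthogonal vector representation of a graph $G=(V,E)$ in $\mathbb{R}^d$ is a map $\phi:V\to\mathbb{R}^d$ with $\phi(v)\neq 0$ for all $v$, and for distinct $u,v$: $\langle\phi(u),\phi(v)\rangle=0$ if and only if $uv\notin E$. *)

theory Defs
  imports "HOL-Analysis.Analysis"
begin

definition simple_graph :: "'a set \<Rightarrow> ('a \<Rightarrow> 'a \<Rightarrow> bool) \<Rightarrow> bool" where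
  "simple_graph V E \<longleftrightarrow> finite V \<and> (\<forall>x y. E x y \<longrightarrow> x \<in> V \<and> y \<in> V)
     \<and> (\<forall>x y. E x y \<longrightarrow> E y x) \<and> (\<forall>x. \<not> E x x)"

definition graph_connected :: "'a set \<Rightarrow> ('a \<Rightarrow> 'a \<Rightarrow> bool) \<Rightarrow> bool" where
  "graph_connected V E \<longleftrightarrow> (\<forall>x\<in>V. \<forall>y\<in>V. E\<^sup>*\<^sup>* x y)"

definition degree :: "'a set \<Rightarrow> ('a \<Rightarrow> 'a \<Rightarrow> bool) \<Rightarrow> 'a \<Rightarrow> nat" where
  "degree V E x = card {y \<in> V. E x y}"

definition pendant :: "'a set \<Rightarrow> ('a \<Rightarrow> 'a \<Rightarrow> bool) \<Rightarrow> 'a \<Rightarrow> bool" where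
  "pendant V E x \<longleftrightarrow> x \<in> V \<and> degree V E x = 1"

definition complement :: "'a set \<Rightarrow> ('a \<Rightarrow> 'a \<Rightarrow> bool) \<Rightarrow> 'a \<Rightarrow> 'a \<Rightarrow> bool" where
  "complement V E x y \<longleftrightarrow> x \<in> V \<and> y \<in> V \<and> x \<noteq> y \<and> \<not> E x y"

definition orth_rep :: "'a set \<Rightarrow> ('a \<Rightarrow> 'a \<Rightarrow> bool) \<Rightarrow> ('a \<Rightarrow> real^3) \<Rightarrow> bool" where
  "orth_rep V E \<phi> \<longleftrightarrow> (\<forall>x\<in>V. \<phi> x \<noteq> 0) \<and>
     (\<forall>x\<in>V. \<forall>y\<in>V. x \<noteq> y \<longrightarrow> (\<phi> x \<bullet> \<phi> y = 0 \<longleftrightarrow> \<not> E x y))"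

definition pairwise_lin_indep :: "'a set \<Rightarrow> ('a \<Rightarrow> real^3) \<Rightarrow> bool" where
  "pairwise_lin_indep V \<phi> \<longleftrightarrow> (\<forall>x\<in>V. \<forall>y\<in>V. x \<noteq> y \<longrightarrow>
     (\<forall>a b::real. a *\<^sub>R \<phi> x + b *\<^sub>R \<phi> y = 0 \<longrightarrow> a = 0 \<and> b = 0))"

definition add_triangle :: "('a \<Rightarrow> 'a \<Rightarrow> bool) \<Rightarrow> 'a \<Rightarrow> 'a \<Rightarrow> 'a \<Rightarrow> 'a \<Rightarrow> 'a \<Rightarrow> bool" where
  "add_triangle E w u v x y \<longleftrightarrow> E x y \<or>
     {x, y} = {u, w} \<or> {x, y} = {v, w} \<or> {x, y} = {u, v}"

end

theory Submission
  imports Defs "HOL-Analysis.Cross3"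
begin

unbundle cross3_syntax

lemma frame3:
  fixes a :: "real^3" assumes a: "a \<noteq> 0"
  obtains e1 e2 where "e1 \<noteq> 0" "e2 \<noteq> 0" "a \<bullet> e1 = 0" "a \<bullet> e2 = 0" "e1 \<bullet> e2 = 0"
    "\<And>y. y \<bullet> e1 = 0 \<Longrightarrow> y \<bullet> e2 = 0 \<Longrightarrow> (a \<bullet> a) *\<^sub>R y = (a \<bullet> y) *\<^sub>R a"
proof -
  obtain c where c: "a \<times> c \<noteq> 0" using cross_basis_nonzero[OF a] by blast
  define e1 where "e1 = a \<times> c"
  define e2 where "e2 = a \<times> e1"
  have ae1: "a \<bullet> e1 = 0" unfolding e1_def by (simp add: dot_cross_self)
  have ae2: "a \<bullet> e2 = 0" unfolding e2_def by (simp add: dot_cross_self)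
  have e12: "e1 \<bullet> e2 = 0" unfolding e2_def by (simp add: dot_cross_self)
  have e1: "e1 \<noteq> 0" using c e1_def by simp
  have "(norm e2)\<^sup>2 = (norm a)\<^sup>2 * (norm e1)\<^sup>2"
    unfolding e2_def using norm_cross[of a e1] ae1 by simp
  moreover have "(norm a)\<^sup>2 * (norm e1)\<^sup>2 > 0" using a e1 by simp
  ultimately have e2: "e2 \<noteq> 0" by auto
  show ?thesis
  proof (rule that[OF e1 e2 ae1 ae2 e12])
    fix y assume y1: "y \<bullet> e1 = 0" and y2: "y \<bullet> e2 = 0"
    define z where "z = (a \<bullet> a) *\<^sub>R y - (a \<bullet> y) *\<^sub>R a"
    have za: "z \<bullet> a = 0" unfolding z_def by (simp add: algebra_simps inner_commute)
    have z1: "z \<bullet> e1 = 0" unfolding z_def using y1 ae1 by (simp add: algebra_simps)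
    have z2: "z \<bullet> e2 = 0" unfolding z_def using y2 ae2 by (simp add: algebra_simps)
    have "z \<times> e2 = 0" unfolding e2_def using Lagrange[of z a e1] z1 za by simp
    with z2 e2 norm_and_cross_eq_0[of z e2] have "z = 0" by auto
    then show "(a \<bullet> a) *\<^sub>R y = (a \<bullet> y) *\<^sub>R a" unfolding z_def by simp
  qed
qed

lemma indep_helper:
  fixes p q r :: "real^3"
  assumes "a *\<^sub>R p + b *\<^sub>R q = 0" "r \<bullet> p = 0" "r \<bullet> q \<noteq> 0" "p \<noteq> 0"
  shows "a = 0 \<and> b = 0"
proof -
  have "r \<bullet> (a *\<^sub>R p + b *\<^sub>R q) = 0" using assms(1) by simp
  hence "b * (r \<bullet> q) = 0" using assms(2) by (simp add: inner_add_right)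
  hence b: "b = 0" using assms(3) by simp
  with assms(1) have "a *\<^sub>R p = 0" by simp
  with assms(4) have "a = 0" by simp
  with b show ?thesis by simp
qed

lemma bad_finite:
  fixes \<alpha> \<beta> :: real
  assumes "\<not> (\<alpha> = 0 \<and> \<beta> = 0)" "n1 \<noteq> 0" "n2 \<noteq> 0"
  shows "{s. \<alpha> + s * \<beta> = 0 \<or> - s * n2 * \<alpha> + n1 * \<beta> = 0} \<subseteq> {- \<alpha> / \<beta>, n1 * \<beta> / (n2 * \<alpha>)}"
proof
  fix s assume "s \<in> {s. \<alpha> + s * \<beta> = 0 \<or> - s * n2 * \<alpha> + n1 * \<beta> = 0}"
  then consider "\<alpha> + s * \<beta> = 0" | "- s * n2 * \<alpha> + n1 * \<beta> = 0" by blast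
  then show "s \<in> {- \<alpha> / \<beta>, n1 * \<beta> / (n2 * \<alpha>)}"
  proof cases
    case 1
    then have "\<beta> \<noteq> 0" using assms by auto
    with 1 have "s = - \<alpha> / \<beta>" by (simp add: field_simps)
    then show ?thesis by simp
  next
    case 2
    then have "\<alpha> \<noteq> 0" using assms by auto
    with 2 assms have "s = n1 * \<beta> / (n2 * \<alpha>)" by (simp add: field_simps)
    then show ?thesis by simp
  qed
qed

theorem lemma4p6:
  fixes V :: "'a set" and E :: "'a \<Rightarrow> 'a \<Rightarrow> bool" and w u v :: 'a
  assumes "simple_graph V E"
    and "graph_connected V E"
    and "pendant V E w"
    and "u \<notin> V" and "v \<notin> V" and "u \<noteq> v"
    and "\<exists>\<phi>. orth_rep V (complement V E) \<phi> \<and> pairwise_lin_indep V \<phi>"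
  shows "\<exists>\<psi>. orth_rep (V \<union> {u, v}) (complement (V \<union> {u, v}) (add_triangle E w u v)) \<psi>
              \<and> pairwise_lin_indep (V \<union> {u, v}) \<psi>"
proof -
  obtain \<phi> where orth: "orth_rep V (complement V E) \<phi>" and pli: "pairwise_lin_indep V \<phi>"
    using assms(7) by blast
  have wV: "w \<in> V" using assms(3) by (simp add: pendant_def)
  have nz: "\<And>x. x \<in> V \<Longrightarrow> \<phi> x \<noteq> 0" using orth by (simp add: orth_rep_def)
  define a where "a = \<phi> w"
  have a: "a \<noteq> 0" using nz wV a_def by simp
  obtain e1 e2 where e1: "e1 \<noteq> 0" and e2: "e2 \<noteq> 0" and ae1: "a \<bullet> e1 = 0" and ae2: "a \<bullet> e2 = 0"
    and e12: "e1 \<bullet> e2 = 0"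
    and par: "\<And>y. y \<bullet> e1 = 0 \<Longrightarrow> y \<bullet> e2 = 0 \<Longrightarrow> (a \<bullet> a) *\<^sub>R y = (a \<bullet> y) *\<^sub>R a"
    using frame3[OF a] by metis
  define n1 where "n1 = e1 \<bullet> e1"
  define n2 where "n2 = e2 \<bullet> e2"
  have n1: "n1 \<noteq> 0" using e1 n1_def by simp
  have n2: "n2 \<noteq> 0" using e2 n2_def by simp
  have ab: "\<not> (e1 \<bullet> \<phi> x = 0 \<and> e2 \<bullet> \<phi> x = 0)" if x: "x \<in> V" "x \<noteq> w" for x
  proof
    assume h: "e1 \<bullet> \<phi> x = 0 \<and> e2 \<bullet> \<phi> x = 0"
    have "(a \<bullet> a) *\<^sub>R \<phi> x = (a \<bullet> \<phi> x) *\<^sub>R a" using par[of "\<phi> x"] h by (simp add: inner_commute)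
    hence "(a \<bullet> a) *\<^sub>R \<phi> x + (- (a \<bullet> \<phi> x)) *\<^sub>R \<phi> w = 0" by (simp add: a_def)
    with pli x wV have "a \<bullet> a = 0" unfolding pairwise_lin_indep_def by blast
    with a show False by simp
  qed
  define B where "B = (\<Union>x\<in>V - {w}. {s. e1 \<bullet> \<phi> x + s * (e2 \<bullet> \<phi> x) = 0 \<or>
                         - s * n2 * (e1 \<bullet> \<phi> x) + n1 * (e2 \<bullet> \<phi> x) = 0})"
  have "finite B" unfolding B_def
  proof (rule finite_UN_I)
    show "finite (V - {w})" using assms(1) by (simp add: simple_graph_def)
    fix x assume "x \<in> V - {w}"
    then show "finite {s. e1 \<bullet> \<phi> x + s * (e2 \<bullet> \<phi> x) = 0 \<or>
                         - s * n2 * (e1 \<bullet> \<phi> x) + n1 * (e2 \<bullet> \<phi> x) = 0}"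
    proof -
      assume x: "x \<in> V - {w}"
      show ?thesis
        by (rule finite_subset[OF bad_finite[OF ab n1 n2]]) (use x in auto)
    qed
  qed
  then obtain s where sB: "s \<notin> B" using ex_new_if_finite[OF infinite_UNIV_char_0] by blast
  define pu where "pu = e1 + s *\<^sub>R e2"
  define pv where "pv = (- s * n2) *\<^sub>R e1 + n1 *\<^sub>R e2"
  have e21: "e2 \<bullet> e1 = 0" using e12 by (simp add: inner_commute)
  have pua: "pu \<bullet> a = 0" unfolding pu_def using ae1 ae2 by (simp add: inner_add_left inner_add_right inner_commute[of _ a])
  have pva: "pv \<bullet> a = 0" unfolding pv_def using ae1 ae2 by (simp add: inner_add_left inner_add_right inner_diff_right inner_commute[of _ a])
  have pupv: "pu \<bullet> pv = 0" unfolding pu_def pv_def n1_def n2_def using e12 e21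
    by (simp add: inner_add_left inner_add_right algebra_simps)
  have pue1: "pu \<bullet> e1 = n1" unfolding pu_def n1_def using e21 by (simp add: inner_add_left)
  have pve2: "pv \<bullet> e2 = n1 * n2" unfolding pv_def n2_def using e12 by (simp add: inner_add_left inner_diff_left)
  have pu0: "pu \<noteq> 0" using pue1 n1 by auto
  have pv0: "pv \<noteq> 0" using pve2 n1 n2 by auto
  have pux: "pu \<bullet> \<phi> x \<noteq> 0" and pvx: "pv \<bullet> \<phi> x \<noteq> 0" if "x \<in> V" "x \<noteq> w" for x
  proof -
    have "s \<notin> {s. e1 \<bullet> \<phi> x + s * (e2 \<bullet> \<phi> x) = 0 \<or>
                         - s * n2 * (e1 \<bullet> \<phi> x) + n1 * (e2 \<bullet> \<phi> x) = 0}"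
      using sB that unfolding B_def by blast
    then show "pu \<bullet> \<phi> x \<noteq> 0" "pv \<bullet> \<phi> x \<noteq> 0" unfolding pu_def pv_def
      by (auto simp: inner_add_left inner_diff_left algebra_simps)
  qed
  define \<psi> where "\<psi> = \<phi>(u := pu, v := pv)"
  have psiV: "\<psi> x = \<phi> x" if "x \<in> V" for x using that assms(4,5) unfolding \<psi>_def by auto
  have psiu: "\<psi> u = pu" and psiv: "\<psi> v = pv" unfolding \<psi>_def using assms(6) by auto
  have Eu: "\<not> E u x" "\<not> E x u" "\<not> E v x" "\<not> E x v" for x
    using assms(1,4,5) unfolding simple_graph_def by blast+
  have uw: "u \<noteq> w" "v \<noteq> w" using wV assms(4,5) by auto
  let ?W = "V \<union> {u, v}"
  let ?C = "complement ?W (add_triangle E w u v)"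
  have CV: "?C x y \<longleftrightarrow> complement V E x y" if "x \<in> V" "y \<in> V" for x y
    using that assms(4,5) unfolding complement_def add_triangle_def by (auto simp: doubleton_eq_iff)
  have Cux: "?C u x \<longleftrightarrow> x \<noteq> w" "?C x u \<longleftrightarrow> x \<noteq> w"
       "?C v x \<longleftrightarrow> x \<noteq> w" "?C x v \<longleftrightarrow> x \<noteq> w" if "x \<in> V" for x
    using that assms(4,5,6) uw Eu unfolding complement_def add_triangle_def
    by (auto simp: doubleton_eq_iff)
  have Cuv: "\<not> ?C u v" "\<not> ?C v u" unfolding complement_def add_triangle_def by auto
  have "orth_rep ?W ?C \<psi>"
    unfolding orth_rep_def
  proof (intro conjI ballI impI)
    fix x assume "x \<in> ?W" then show "\<psi> x \<noteq> 0" using psiV nz psiu psiv pu0 pv0 by auto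
  next
    fix x y assume x: "x \<in> ?W" and y: "y \<in> ?W" and xy: "x \<noteq> y"
    show "(\<psi> x \<bullet> \<psi> y = 0) = (\<not> ?C x y)"
    proof -
      consider "x \<in> V" "y \<in> V" | "x \<in> V" "y = u" | "x \<in> V" "y = v" | "x = u" "y \<in> V"
        | "x = v" "y \<in> V" | "x = u" "y = v" | "x = v" "y = u" | "x = u" "y = u" | "x = v" "y = v"
        using x y by auto
      then show ?thesis
      proof cases
        case 1 then show ?thesis using orth xy psiV CV unfolding orth_rep_def by simp
      next
        case 2 then show ?thesis using psiV psiu Cux pux pua a_def
          by (cases "x = w") (auto simp: inner_commute)
      next
        case 3 then show ?thesis using psiV psiv Cux pvx pva a_def
          by (cases "x = w") (auto simp: inner_commute)
      next
        case 4 then show ?thesis using psiV psiu Cux pux pua a_def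
          by (cases "y = w") (auto simp: inner_commute)
      next
        case 5 then show ?thesis using psiV psiv Cux pvx pva a_def
          by (cases "y = w") (auto simp: inner_commute)
      next
        case 6 then show ?thesis using psiu psiv Cuv pupv by simp
      next
        case 7 then show ?thesis using psiu psiv Cuv pupv by (simp add: inner_commute)
      qed (use xy in auto)
    qed
  qed
  moreover have "pairwise_lin_indep ?W \<psi>"
    unfolding pairwise_lin_indep_def
  proof (intro ballI impI allI)
    fix x y and c d :: real
    assume x: "x \<in> ?W" and y: "y \<in> ?W" and xy: "x \<noteq> y" and eq: "c *\<^sub>R \<psi> x + d *\<^sub>R \<psi> y = 0"
    have eq': "d *\<^sub>R \<psi> y + c *\<^sub>R \<psi> x = 0" using eq by (simp add: add.commute)
    have puu: "pu \<bullet> pu \<noteq> 0" "pv \<bullet> pv \<noteq> 0" using pu0 pv0 by auto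
    have pvpu: "pv \<bullet> pu = 0" using pupv by (simp add: inner_commute)
    consider "x \<in> V" "y \<in> V" | "x \<in> V" "y = u" | "x \<in> V" "y = v" | "x = u" "y \<in> V"
        | "x = v" "y \<in> V" | "x = u" "y = v" | "x = v" "y = u" | "x = u" "y = u" | "x = v" "y = v"
        using x y by auto
    then show "c = 0 \<and> d = 0"
    proof cases
      case 1 then show ?thesis using pli xy eq psiV unfolding pairwise_lin_indep_def by auto
    next
      case 2 then show ?thesis
      proof (cases "x = w")
        case True
        then show ?thesis using indep_helper[OF eq, of pu] 2 psiV psiu pua a_def puu nz wV
          by (auto simp: inner_commute)
      next
        case False
        then show ?thesis using indep_helper[OF eq', of pv] 2 psiV psiu pvpu pvx pu0 by auto
      qed
    next
      case 3 then show ?thesis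
      proof (cases "x = w")
        case True
        then show ?thesis using indep_helper[OF eq, of pv] 3 psiV psiv pva a_def puu nz wV
          by (auto simp: inner_commute)
      next
        case False
        then show ?thesis using indep_helper[OF eq', of pu] 3 psiV psiv pupv pux pv0 by auto
      qed
    next
      case 4 then show ?thesis
      proof (cases "y = w")
        case True
        then show ?thesis using indep_helper[OF eq', of pu] 4 psiV psiu pua a_def puu nz wV
          by (auto simp: inner_commute)
      next
        case False
        then show ?thesis using indep_helper[OF eq, of pv] 4 psiV psiu pvpu pvx pu0 by auto
      qed
    next
      case 5 then show ?thesis
      proof (cases "y = w")
        case True
        then show ?thesis using indep_helper[OF eq', of pv] 5 psiV psiv pva a_def puu nz wV
          by (auto simp: inner_commute)
      next
        case False
        then show ?thesis using indep_helper[OF eq, of pu] 5 psiV psiv pupv pux pv0 by auto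
      qed
    next
      case 6 then show ?thesis using indep_helper[OF eq, of pv] psiu psiv pvpu puu pu0 by auto
    next
      case 7 then show ?thesis using indep_helper[OF eq, of pu] psiu psiv pupv puu pv0 by auto
    qed (use xy in auto)
  qed
  ultimately show ?thesis by blast
qed

end
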